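(* Let $G$ be a directed graph without self-loops on vertex set $V=\{0,1,\dots,n-1\}$, $n\ge2$, with integer edge weights in $[-M,M]$, $M\ge1$. Let $H=100M$ and $L=\lceil\log_2 n\rceil$. Let $G'$ be the directed graph with vertices $u_A,u_B,u_C,u_D$ for each $u\in V$, a vertex $x$, and vertices $z_1,\dots,z_L,o_1,\dots,o_L$, and edges: for every edge $(u,v)$ of $G$, edges $(u_A,v_B),(u_B,v_C),(u_C,v_D)$ of weight $2H+w(u,v)$; for every $u\in V$, edges $(u_A,x)$ and $(x,u_D)$ of weight $3H$; for every $u\in V$ and $i\in\{1,\dots,L\}$, if the $i$-th bit of the binary representation of $u$ is $0$ then edges $(u_A,z_i)$ of weight $2H$ and $(o_i,u_D)$ of weight $3H$, and otherwise edges $(u_A,o_i)$ of weight $2H$ and $(z_i,u_D)$ of weight $3H$. Then the number of ordered pairs $(s,t)$ of distinct vertices of $G'$ other than $x$ such that some shortest $s$-to-$t$ path in $G'$ passes through $x$ equals $n$ minus the number of vertices of $G$ that lie on a negative-weight triangle.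
   Context: A negative-weight triangle in a directed graph is a triple of distinct vertices $u,v,t$ with edges $(u,v),(v,t),(t,u)$ whose weights sum to a negative number. *)

theory Defs
  imports Complex_Main
begin

type_synonym ('v) wedge = "'v \<times> int \<times> 'v"

definition etail :: "'v wedge \<Rightarrow> 'v" where "etail e = fst e"
definition ewt :: "'v wedge \<Rightarrow> int" where "ewt e = fst (snd e)"
definition ehead :: "'v wedge \<Rightarrow> 'v" where "ehead e = snd (snd e)"

definition is_path :: "'v wedge set \<Rightarrow> 'v \<Rightarrow> 'v \<Rightarrow> 'v wedge list \<Rightarrow> bool" where
  "is_path E s t p \<longleftrightarrow>
     p \<noteq> [] \<and> set p \<subseteq> E \<and> etail (hd p) = s \<and> ehead (last p) = t \<and>
     (\<forall>i. Suc i < length p \<longrightarrow> ehead (p ! i) = etail (p ! Suc i)) \<and>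
     distinct (s # map ehead p)"

definition path_weight :: "'v wedge list \<Rightarrow> int" where
  "path_weight p = sum_list (map ewt p)"

definition is_shortest_path :: "'v wedge set \<Rightarrow> 'v \<Rightarrow> 'v \<Rightarrow> 'v wedge list \<Rightarrow> bool" where
  "is_shortest_path E s t p \<longleftrightarrow>
     is_path E s t p \<and> (\<forall>q. is_path E s t q \<longrightarrow> path_weight p \<le> path_weight q)"

definition interior_verts :: "'v wedge list \<Rightarrow> 'v set" where
  "interior_verts p = set (map ehead (butlast p))"

definition on_neg_triangle :: "(nat \<times> nat) set \<Rightarrow> (nat \<times> nat \<Rightarrow> int) \<Rightarrow> nat \<Rightarrow> bool" where
  "on_neg_triangle E w u \<longleftrightarrow>
     (\<exists>v t. u \<noteq> v \<and> v \<noteq> t \<and> t \<noteq> u \<and> (u, v) \<in> E \<and> (v, t) \<in> E \<and> (t, u) \<in> E \<and>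
            w (u, v) + w (v, t) + w (t, u) < 0)"

datatype vert = VA nat | VB nat | VC nat | VD nat | VX | VZ nat | VO nat

(* i-th bit (i \<ge> 1, least significant bit is bit 1) of the binary representation of u *)
definition bit_i :: "nat \<Rightarrow> nat \<Rightarrow> bool" where
  "bit_i u i = odd (u div 2 ^ (i - 1))"

definition logL :: "nat \<Rightarrow> nat" where
  "logL n = nat \<lceil>log 2 (real n)\<rceil>"

definition verts' :: "nat \<Rightarrow> vert set" where
  "verts' n = VA ` {0..<n} \<union> VB ` {0..<n} \<union> VC ` {0..<n} \<union> VD ` {0..<n} \<union> {VX}
             \<union> VZ ` {1..logL n} \<union> VO ` {1..logL n}"

definition edges' :: "nat \<Rightarrow> int \<Rightarrow> (nat \<times> nat) set \<Rightarrow> (nat \<times> nat \<Rightarrow> int) \<Rightarrow> vert wedge set" where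
  "edges' n M E w =
     (let H = 100 * M; L = logL n in
       {(VA u, 2*H + w (u,v), VB v) | u v. (u,v) \<in> E}
     \<union> {(VB u, 2*H + w (u,v), VC v) | u v. (u,v) \<in> E}
     \<union> {(VC u, 2*H + w (u,v), VD v) | u v. (u,v) \<in> E}
     \<union> {(VA u, 3*H, VX) | u. u < n}
     \<union> {(VX, 3*H, VD u) | u. u < n}
     \<union> {(VA u, 2*H, VZ i) | u i. u < n \<and> 1 \<le> i \<and> i \<le> L \<and> \<not> bit_i u i}
     \<union> {(VO i, 3*H, VD u) | u i. u < n \<and> 1 \<le> i \<and> i \<le> L \<and> \<not> bit_i u i}
     \<union> {(VA u, 2*H, VO i) | u i. u < n \<and> 1 \<le> i \<and> i \<le> L \<and> bit_i u i}
     \<union> {(VZ i, 3*H, VD u) | u i. u < n \<and> 1 \<le> i \<and> i \<le> L \<and> bit_i u i})"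

end

theory Submission
  imports Defs
begin
fun walk :: "'v wedge set \<Rightarrow> 'v \<Rightarrow> 'v \<Rightarrow> 'v wedge list \<Rightarrow> bool" where
  "walk E s t [] = (s = t)"
| "walk E s t (e # p) = (e \<in> E \<and> etail e = s \<and> walk E (ehead e) t p)"

lemma walk_imp: "walk E s t p \<Longrightarrow> p \<noteq> [] \<Longrightarrow> set p \<subseteq> E \<and> etail (hd p) = s \<and> ehead (last p) = t \<and>
     (\<forall>i. Suc i < length p \<longrightarrow> ehead (p ! i) = etail (p ! Suc i))"
proof (induction p arbitrary: s)
  case Nil then show ?case by simp
next
  case (Cons e p)
  show ?case
  proof (cases "p = []")
    case True then show ?thesis using Cons by simp
  next
    case False
    from Cons.prems have "walk E (ehead e) t p" by simp
    from Cons.IH[OF this False] have ih: "set p \<subseteq> E \<and> etail (hd p) = ehead e \<and> ehead (last p) = t \<and>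
     (\<forall>i. Suc i < length p \<longrightarrow> ehead (p ! i) = etail (p ! Suc i))" .
    have ch: "\<forall>i. Suc i < length (e#p) \<longrightarrow> ehead ((e#p) ! i) = etail ((e#p) ! Suc i)"
    proof (intro allI impI)
      fix i assume "Suc i < length (e#p)"
      then show "ehead ((e#p) ! i) = etail ((e#p) ! Suc i)"
        using ih False by (cases i) (auto simp: hd_conv_nth)
    qed
    show ?thesis using ih ch Cons.prems False by simp
  qed
qed

lemma imp_walk: "p \<noteq> [] \<Longrightarrow> set p \<subseteq> E \<Longrightarrow> etail (hd p) = s \<Longrightarrow> ehead (last p) = t \<Longrightarrow>
     (\<forall>i. Suc i < length p \<longrightarrow> ehead (p ! i) = etail (p ! Suc i)) \<Longrightarrow> walk E s t p"
proof (induction p arbitrary: s)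
  case Nil then show ?case by simp
next
  case (Cons e p)
  show ?case
  proof (cases "p = []")
    case True then show ?thesis using Cons by simp
  next
    case False
    have "ehead e = etail (hd p)" using Cons.prems(5)[rule_format, of 0] False by (simp add: hd_conv_nth)
    moreover have "\<forall>i. Suc i < length p \<longrightarrow> ehead (p ! i) = etail (p ! Suc i)"
      using Cons.prems(5) by (metis Suc_less_eq length_Cons nth_Cons_Suc)
    ultimately have "walk E (ehead e) t p" using Cons.IH[OF False] Cons.prems False by simp
    then show ?thesis using Cons.prems by simp
  qed
qed

lemma is_path_iff: "is_path E s t p \<longleftrightarrow> p \<noteq> [] \<and> walk E s t p \<and> distinct (s # map ehead p)"
  unfolding is_path_def using walk_imp imp_walk by metis

lemma pw_cons[simp]: "path_weight (e # p) = ewt e + path_weight p" "path_weight [] = 0"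
  by (simp_all add: path_weight_def)

lemma noA: "(a, b, VA u) \<notin> edges' n M E w"
  unfolding edges'_def Let_def by auto
lemma noD: "(VD u, b, c) \<notin> edges' n M E w"
  unfolding edges'_def Let_def by auto
lemma fromA: "(VA u, k, c) \<in> edges' n M E w \<Longrightarrow>
   (\<exists>a. (u,a) \<in> E \<and> k = 200*M + w(u,a) \<and> c = VB a) \<or> (u < n \<and> k = 300*M \<and> c = VX) \<or>
   (\<exists>i. k = 200*M \<and> c = VZ i \<and> \<not> bit_i u i) \<or> (\<exists>i. k = 200*M \<and> c = VO i \<and> bit_i u i)"
  unfolding edges'_def Let_def by auto
lemma fromB: "(VB u, k, c) \<in> edges' n M E w \<Longrightarrow> (\<exists>a. (u,a) \<in> E \<and> k = 200*M + w(u,a) \<and> c = VC a)"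
  unfolding edges'_def Let_def by auto
lemma fromC: "(VC u, k, c) \<in> edges' n M E w \<Longrightarrow> (\<exists>a. (u,a) \<in> E \<and> k = 200*M + w(u,a) \<and> c = VD a)"
  unfolding edges'_def Let_def by auto
lemma fromX: "(VX, k, c) \<in> edges' n M E w \<Longrightarrow> (\<exists>a. k = 300*M \<and> c = VD a)"
  unfolding edges'_def Let_def by auto
lemma fromZ: "(VZ i, k, c) \<in> edges' n M E w \<Longrightarrow> (\<exists>a. k = 300*M \<and> c = VD a \<and> bit_i a i)"
  unfolding edges'_def Let_def by auto
lemma fromO: "(VO i, k, c) \<in> edges' n M E w \<Longrightarrow> (\<exists>a. k = 300*M \<and> c = VD a \<and> \<not> bit_i a i)"
  unfolding edges'_def Let_def by auto
lemma toX: "(a, k, VX) \<in> edges' n M E w \<Longrightarrow> \<exists>u. a = VA u \<and> k = 300*M \<and> u < n"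
  unfolding edges'_def Let_def by auto

lemma walk_D: "walk (edges' n M E w) (VD v) t p \<Longrightarrow> p = [] \<and> t = VD v"
proof (cases p)
  case (Cons e q)
  assume "walk (edges' n M E w) (VD v) t p"
  then have "(VD v, fst (snd e), snd (snd e)) \<in> edges' n M E w" using Cons
    by (auto simp: etail_def) (metis prod.collapse)
  then show ?thesis using noD by blast
qed simp

lemma X_walk: "walk (edges' n M E w) s t p \<Longrightarrow> VX \<in> set (map ehead (butlast p)) \<Longrightarrow>
   \<exists>u v. u < n \<and> s = VA u \<and> t = VD v \<and> p = [(VA u,300*M,VX),(VX,300*M,VD v)]"
proof (induction p arbitrary: s)
  case Nil then show ?case by simp
next
  case (Cons e p)
  obtain a k c where e: "e = (a,k,c)" by (cases e)
  have ein: "(a,k,c) \<in> edges' n M E w" and sa: "a = s" and wp: "walk (edges' n M E w) c t p"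
    using Cons.prems(1) e by (auto simp: etail_def ehead_def)
  have pne: "p \<noteq> []" using Cons.prems(2) by auto
  show ?case
  proof (cases "c = VX")
    case True
    obtain u where u: "a = VA u" "k = 300*M" "u < n" using toX ein True by blast
    obtain e2 p2 where p: "p = e2 # p2" using pne by (cases p) auto
    obtain a2 k2 c2 where e2: "e2 = (a2,k2,c2)" by (cases e2)
    have a2: "a2 = VX" using wp p e2 True by (auto simp: etail_def)
    have "(VX,k2,c2) \<in> edges' n M E w" and w2: "walk (edges' n M E w) c2 t p2"
      using wp p e2 True by (auto simp: etail_def ehead_def)
    then obtain v where v: "k2 = 300*M" "c2 = VD v" using fromX by blast
    have "p2 = [] \<and> t = VD v" using walk_D w2 v by blast
    then show ?thesis using u v p e2 e True sa a2 by auto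
  next
    case False
    then have "VX \<in> set (map ehead (butlast p))" using Cons.prems(2) e pne by (auto simp: ehead_def)
    from Cons.IH[OF wp this] obtain u where "c = VA u" by blast
    then show ?thesis using ein noA by blast
  qed
qed
lemma walk_consE: "walk E s t (e#q) \<Longrightarrow> \<exists>k c. e = (s,k,c) \<and> (s,k,c) \<in> E \<and> walk E c t q"
  by (cases e) (auto simp: etail_def ehead_def)

lemma walk_ne: "walk E s t q \<Longrightarrow> s \<noteq> t \<Longrightarrow> \<exists>e q'. q = e # q'"
  by (cases q) auto

lemma ewt3[simp]: "ewt (a,k,c) = k" by (simp add: ewt_def)

lemma AD_walk: assumes "walk (edges' n M E w) (VA u) (VD u) q"
  shows "path_weight q = 600*M \<or> (\<exists>a b. (u,a)\<in>E \<and> (a,b)\<in>E \<and> (b,u)\<in>E \<and>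
           path_weight q = 600*M + w(u,a) + w(a,b) + w(b,u))"
proof -
  let ?E = "edges' n M E w"
  obtain e1 q1 where q: "q = e1 # q1" using walk_ne[OF assms] by blast
  obtain k c where e1: "e1 = (VA u,k,c)" "(VA u,k,c) \<in> ?E" and w1: "walk ?E c (VD u) q1"
    using walk_consE[OF assms[unfolded q]] by blast
  from fromA[OF e1(2)] show ?thesis
  proof (elim disjE exE conjE)
    fix a assume a: "(u,a) \<in> E" "k = 200*M + w(u,a)" "c = VB a"
    obtain e2 q2 where q1: "q1 = e2 # q2" using walk_ne[OF w1] a by auto
    obtain k2 c2 where e2: "e2 = (VB a,k2,c2)" "(VB a,k2,c2) \<in> ?E" and w2: "walk ?E c2 (VD u) q2"
      using walk_consE[OF w1[unfolded q1 a(3)]] by blast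
    obtain b where b: "(a,b) \<in> E" "k2 = 200*M + w(a,b)" "c2 = VC b" using fromB[OF e2(2)] by blast
    obtain e3 q3 where q2: "q2 = e3 # q3" using walk_ne[OF w2] b by auto
    obtain k3 c3 where e3: "e3 = (VC b,k3,c3)" "(VC b,k3,c3) \<in> ?E" and w3: "walk ?E c3 (VD u) q3"
      using walk_consE[OF w2[unfolded q2 b(3)]] by blast
    obtain d where d: "(b,d) \<in> E" "k3 = 200*M + w(b,d)" "c3 = VD d" using fromC[OF e3(2)] by blast
    have "q3 = [] \<and> VD u = VD d" using walk_D w3 d by blast
    then show ?thesis using q q1 q2 e1 e2 e3 a b d by auto
  next
    assume a: "u < n" "k = 300*M" "c = VX"
    obtain e2 q2 where q1: "q1 = e2 # q2" using walk_ne[OF w1] a by auto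
    obtain k2 c2 where e2: "e2 = (VX,k2,c2)" "(VX,k2,c2) \<in> ?E" and w2: "walk ?E c2 (VD u) q2"
      using walk_consE[OF w1[unfolded q1 a(3)]] by blast
    obtain d where d: "k2 = 300*M" "c2 = VD d" using fromX[OF e2(2)] by blast
    have "q2 = [] \<and> VD u = VD d" using walk_D w2 d by blast
    then show ?thesis using q q1 e1 e2 a d by auto
  next
    fix i assume a: "k = 200*M" "c = VZ i" "\<not> bit_i u i"
    obtain e2 q2 where q1: "q1 = e2 # q2" using walk_ne[OF w1] a by auto
    obtain k2 c2 where e2: "e2 = (VZ i,k2,c2)" "(VZ i,k2,c2) \<in> ?E" and w2: "walk ?E c2 (VD u) q2"
      using walk_consE[OF w1[unfolded q1 a(2)]] by blast
    obtain d where d: "k2 = 300*M" "c2 = VD d" "bit_i d i" using fromZ[OF e2(2)] by blast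
    have "q2 = [] \<and> VD u = VD d" using walk_D w2 d by blast
    then show ?thesis using a d by auto
  next
    fix i assume a: "k = 200*M" "c = VO i" "bit_i u i"
    obtain e2 q2 where q1: "q1 = e2 # q2" using walk_ne[OF w1] a by auto
    obtain k2 c2 where e2: "e2 = (VO i,k2,c2)" "(VO i,k2,c2) \<in> ?E" and w2: "walk ?E c2 (VD u) q2"
      using walk_consE[OF w1[unfolded q1 a(2)]] by blast
    obtain d where d: "k2 = 300*M" "c2 = VD d" "\<not> bit_i d i" using fromO[OF e2(2)] by blast
    have "q2 = [] \<and> VD u = VD d" using walk_D w2 d by blast
    then show ?thesis using a d by auto
  qed
qed

lemma two_pow_L: "n \<ge> 1 \<Longrightarrow> n \<le> 2 ^ logL n"
proof -
  assume n: "n \<ge> 1"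
  have "log 2 (real n) \<le> real (logL n)" unfolding logL_def
    using n by (simp add: of_nat_nat) 
  then have "2 powr log 2 (real n) \<le> 2 powr real (logL n)" by simp
  then have "real n \<le> 2 ^ logL n" using n by (simp add: powr_realpow)
  then show ?thesis by (metis of_nat_le_iff of_nat_numeral of_nat_power)
qed

lemma bits_differ: assumes "u \<noteq> v" "u < n" "v < n"
  shows "\<exists>i. 1 \<le> i \<and> i \<le> logL n \<and> bit_i u i \<noteq> bit_i v i"
proof (rule ccontr)
  assume h: "\<not> ?thesis"
  have nL: "n \<le> 2 ^ logL n" using two_pow_L assms by simp
  have "\<forall>j. bit u j = bit v j"
  proof
    fix j show "bit u j = bit v j"
    proof (cases "j < logL n")
      case True
      then have "bit_i u (Suc j) = bit_i v (Suc j)" using h by auto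
      then show ?thesis by (simp add: bit_i_def bit_iff_odd)
    next
      case False
      then have "(2::nat) ^ logL n \<le> 2 ^ j" by simp
      then have "u < 2^j" "v < 2^j" using assms nL by linarith+
      then show ?thesis by (simp add: bit_iff_odd)
    qed
  qed
  then have "u = v" by (simp add: bit_eq_iff)
  then show False using assms by simp
qed
theorem mainTheorem10:
  fixes n :: nat and M :: int and E :: "(nat \<times> nat) set" and w :: "nat \<times> nat \<Rightarrow> int"
  assumes "n \<ge> 2" and "M \<ge> 1"
    and "E \<subseteq> {0..<n} \<times> {0..<n}"
    and "\<forall>u. (u, u) \<notin> E"
    and "\<forall>e\<in>E. - M \<le> w e \<and> w e \<le> M"
  shows "card {(s, t). s \<in> verts' n \<and> t \<in> verts' n \<and> s \<noteq> t \<and> s \<noteq> VX \<and> t \<noteq> VX \<and>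
                 (\<exists>p. is_shortest_path (edges' n M E w) s t p \<and> VX \<in> interior_verts p)}
         = n - card {u \<in> {0..<n}. on_neg_triangle E w u}"
proof -
  let ?E = "edges' n M E w"
  let ?S = "{(s, t). s \<in> verts' n \<and> t \<in> verts' n \<and> s \<noteq> t \<and> s \<noteq> VX \<and> t \<noteq> VX \<and>
                 (\<exists>p. is_shortest_path ?E s t p \<and> VX \<in> interior_verts p)}"
  let ?G = "{u \<in> {0..<n}. \<not> on_neg_triangle E w u}"
  have EL: "?S = (\<lambda>u. (VA u, VD u)) ` ?G"
  proof
    show "?S \<subseteq> (\<lambda>u. (VA u, VD u)) ` ?G"
    proof
      fix st assume "st \<in> ?S"
      then obtain s t p where st: "st = (s,t)" and tv: "t \<in> verts' n" and sp: "is_shortest_path ?E s t p"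
        and xi: "VX \<in> interior_verts p" by blast
      have "walk ?E s t p" using sp by (simp add: is_shortest_path_def is_path_iff)
      from X_walk[OF this] xi obtain u v where uv: "u < n" "s = VA u" "t = VD v"
        and p: "p = [(VA u,300*M,VX),(VX,300*M,VD v)]" by (auto simp: interior_verts_def)
      have v: "v < n" using tv uv by (auto simp: verts'_def)
      have pw: "path_weight p = 600*M" using p by simp
      have short: "\<And>q. is_path ?E s t q \<Longrightarrow> 600*M \<le> path_weight q"
        using sp pw by (auto simp: is_shortest_path_def)
      have uveq: "u = v"
      proof (rule ccontr)
        assume "u \<noteq> v"
        from bits_differ[OF this uv(1) v] obtain i where i: "1 \<le> i" "i \<le> logL n" "bit_i u i \<noteq> bit_i v i"
          by blast
        show False
        proof (cases "bit_i u i")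
          case True
          let ?q = "[(VA u,200*M,VO i),(VO i,300*M,VD v)]"
          have "is_path ?E s t ?q" using True i uv v
            unfolding is_path_iff by (auto simp: etail_def ehead_def edges'_def Let_def)
          from short[OF this] show False using assms(2) by simp
        next
          case False
          let ?q = "[(VA u,200*M,VZ i),(VZ i,300*M,VD v)]"
          have "is_path ?E s t ?q" using False i uv v
            unfolding is_path_iff by (auto simp: etail_def ehead_def edges'_def Let_def)
          from short[OF this] show False using assms(2) by simp
        qed
      qed
      have "\<not> on_neg_triangle E w u"
      proof
        assume "on_neg_triangle E w u"
        then obtain a b where ab: "(u,a) \<in> E" "(a,b) \<in> E" "(b,u) \<in> E" "w (u,a) + w (a,b) + w (b,u) < 0"
          unfolding on_neg_triangle_def by blast
        let ?q = "[(VA u,200*M + w(u,a),VB a),(VB a,200*M + w(a,b),VC b),(VC b, 200*M + w(b,u), VD u)]"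
        have "is_path ?E s t ?q" using ab uv uveq
          unfolding is_path_iff by (auto simp: etail_def ehead_def edges'_def Let_def)
        from short[OF this] show False using ab(4) by simp
      qed
      then show "st \<in> (\<lambda>u. (VA u, VD u)) ` ?G" using st uv uveq by auto
    qed
  next
    show "(\<lambda>u. (VA u, VD u)) ` ?G \<subseteq> ?S"
    proof
      fix st assume "st \<in> (\<lambda>u. (VA u, VD u)) ` ?G"
      then obtain u where st: "st = (VA u, VD u)" and u: "u < n" and nt: "\<not> on_neg_triangle E w u"
        by auto
      let ?p = "[(VA u,300*M,VX),(VX,300*M,VD u)]"
      have pp: "is_path ?E (VA u) (VD u) ?p" using u
        unfolding is_path_iff by (auto simp: etail_def ehead_def edges'_def Let_def)
      have "path_weight ?p \<le> path_weight q" if q: "is_path ?E (VA u) (VD u) q" for q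
      proof -
        have "walk ?E (VA u) (VD u) q" using q by (simp add: is_path_iff)
        from AD_walk[OF this] show ?thesis
        proof
          assume "path_weight q = 600*M" then show ?thesis by simp
        next
          assume "\<exists>a b. (u,a)\<in>E \<and> (a,b)\<in>E \<and> (b,u)\<in>E \<and>
                 path_weight q = 600*M + w(u,a) + w(a,b) + w(b,u)"
          then obtain a b where ab: "(u,a)\<in>E" "(a,b)\<in>E" "(b,u)\<in>E"
              "path_weight q = 600*M + w(u,a) + w(a,b) + w(b,u)" by blast
          have "u \<noteq> a" "a \<noteq> b" "b \<noteq> u" using ab assms(4) by auto
          then have "\<not> (w(u,a) + w(a,b) + w(b,u) < 0)" using nt ab unfolding on_neg_triangle_def by blast
          then show ?thesis using ab(4) by simp
        qed
      qed
      then have "is_shortest_path ?E (VA u) (VD u) ?p" using pp by (simp add: is_shortest_path_def)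
      moreover have "VX \<in> interior_verts ?p" by (simp add: interior_verts_def ehead_def)
      moreover have "VA u \<in> verts' n" "VD u \<in> verts' n" using u by (auto simp: verts'_def)
      ultimately show "st \<in> ?S" using st by blast
    qed
  qed
  have "card ?S = card ?G" unfolding EL by (rule card_image) (auto simp: inj_on_def)
  also have "?G = {0..<n} - {u \<in> {0..<n}. on_neg_triangle E w u}" by auto
  also have "card \<dots> = n - card {u \<in> {0..<n}. on_neg_triangle E w u}"
    by (subst card_Diff_subset) auto
  finally show ?thesis .
qed
end
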